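(* Let $\Gamma=(G,\varphi)$ be a colored graph and let $n\ge 1$. Then the cube complex $C_n(\Gamma)$ satisfies Gromov's link condition: for every cell $\rho$ of $C_n(\Gamma)$, every triangle (3-cycle of vertices pairwise joined by edges) in the link of $\rho$ bounds a 2-simplex in the link of $\rho$. Consequently, $C_n(\Gamma)$, metrized with each cube a unit Euclidean cube, is non-positively curved, i.e. the universal cover of each connected component is CAT(0).
   Context: A graph $G$ is a locally finite 1-dimensional CW complex; its cells are vertices and edges. For a cell $\sigma$ of $G$, let $\partial\sigma$ denote the set of endpoints of $\sigma$ if $\sigma$ is an edge, and $\partial\sigma=\{\sigma\}$ if $\sigma$ is a vertex. $G^n$ carries the product cell structure with cells $\sigma_1\times\cdots\times\sigma_n$. A colored graph $\Gamma=(G,\varphi)$ is a graph with a function $\varphi$ from its vertex set to a set of colors. The configuration space $C_n(\Gamma)$ is the subcomplex of $G^n$ which is the union of those product cells $\sigma_1\times\cdots\times\sigma_n$ with $\varphi(\partial\sigma_i)\cap\varphi(\partial\sigma_j)=\emptyset$ for all $i\ne j$; it is a cube complex. *)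

theory Defs
  imports Main
begin

text \<open>A graph (locally finite 1-dimensional CW complex) is given by a vertex set V,
an edge set E and, for each edge, the two endpoints of its characteristic map
[0,1] -> G: src e (image of 0) and tgt e (image of 1).  Loops (src e = tgt e)
and multiple edges are allowed.\<close>

definition graph :: "'v set \<Rightarrow> 'e set \<Rightarrow> ('e \<Rightarrow> 'v) \<Rightarrow> ('e \<Rightarrow> 'v) \<Rightarrow> bool" where
  "graph V E src tgt \<longleftrightarrow> (\<forall>e\<in>E. src e \<in> V \<and> tgt e \<in> V)"

definition locally_finite :: "'v set \<Rightarrow> 'e set \<Rightarrow> ('e \<Rightarrow> 'v) \<Rightarrow> ('e \<Rightarrow> 'v) \<Rightarrow> bool" where
  "locally_finite V E src tgt \<longleftrightarrow> (\<forall>v\<in>V. finite {e\<in>E. src e = v \<or> tgt e = v})"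

datatype ('v, 'e) cell = Vx 'v | Ed 'e

definition is_cell :: "'v set \<Rightarrow> 'e set \<Rightarrow> ('v, 'e) cell \<Rightarrow> bool" where
  "is_cell V E c = (case c of Vx v \<Rightarrow> v \<in> V | Ed e \<Rightarrow> e \<in> E)"

definition bdry :: "('e \<Rightarrow> 'v) \<Rightarrow> ('e \<Rightarrow> 'v) \<Rightarrow> ('v, 'e) cell \<Rightarrow> 'v set" where
  "bdry src tgt c = (case c of Vx v \<Rightarrow> {v} | Ed e \<Rightarrow> {src e, tgt e})"

text \<open>Cells of C_n(\<Gamma>): product cells \<sigma>_1 x ... x \<sigma>_n (lists of length n) with
 \<phi>(\<partial>\<sigma>_i) \<inter> \<phi>(\<partial>\<sigma>_j) = {} for i \<noteq> j.\<close>
definition conf_cell :: "'v set \<Rightarrow> 'e set \<Rightarrow> ('e \<Rightarrow> 'v) \<Rightarrow> ('e \<Rightarrow> 'v) \<Rightarrow> ('v \<Rightarrow> 'c) \<Rightarrow> nat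
    \<Rightarrow> ('v, 'e) cell list \<Rightarrow> bool" where
  "conf_cell V E src tgt \<phi> n \<sigma> \<longleftrightarrow> length \<sigma> = n \<and> (\<forall>i<n. is_cell V E (\<sigma> ! i)) \<and>
     (\<forall>i<n. \<forall>j<n. i \<noteq> j \<longrightarrow> \<phi> ` bdry src tgt (\<sigma> ! i) \<inter> \<phi> ` bdry src tgt (\<sigma> ! j) = {})"

definition endpt :: "('e \<Rightarrow> 'v) \<Rightarrow> ('e \<Rightarrow> 'v) \<Rightarrow> 'e \<Rightarrow> bool \<Rightarrow> 'v" where
  "endpt src tgt e s = (if s then tgt e else src e)"

text \<open>A cube c of C_n containing \<rho>
as a face is given, together with the face inclusion, by a set D of "directions"
(i, e, s): in coordinate i the vertex \<rho>_i is replaced by an edge e, \<rho>_i being the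
endpoint s of e (s = False: image of 0, s = True: image of 1).  The simplices of
lk(\<rho>) are exactly the nonempty finite such sets D for which the corresponding
product cell is a cell of C_n(\<Gamma>); the dimension of the simplex is |D| - 1 and
the vertices of lk(\<rho>) are the singleton simplices.\<close>
definition link_simplex :: "'v set \<Rightarrow> 'e set \<Rightarrow> ('e \<Rightarrow> 'v) \<Rightarrow> ('e \<Rightarrow> 'v) \<Rightarrow> ('v \<Rightarrow> 'c) \<Rightarrow> nat
    \<Rightarrow> ('v, 'e) cell list \<Rightarrow> (nat \<times> 'e \<times> bool) set \<Rightarrow> bool" where
  "link_simplex V E src tgt \<phi> n \<rho> D \<longleftrightarrow>
     finite D \<and> D \<noteq> {} \<and>
     (\<forall>(i, e, s)\<in>D. i < n \<and> e \<in> E \<and> \<rho> ! i = Vx (endpt src tgt e s)) \<and>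
     (\<forall>(i, e, s)\<in>D. \<forall>(j, e', s')\<in>D. i = j \<longrightarrow> (e, s) = (e', s')) \<and>
     (\<exists>c. conf_cell V E src tgt \<phi> n c \<and>
        (\<forall>i<n. (\<exists>e s. (i, e, s) \<in> D \<and> c ! i = Ed e) \<or>
               ((\<forall>e s. (i, e, s) \<notin> D) \<and> c ! i = \<rho> ! i)))"

end

theory Submission
  imports Defs
begin

lemma ls_wit:
  assumes "link_simplex V E src tgt \<phi> n \<rho> D"
  shows "\<exists>c. conf_cell V E src tgt \<phi> n c \<and> (\<forall>(i,e,s)\<in>D. c!i = Ed e) \<and>
           (\<forall>j<n. (\<forall>e s. (j,e,s)\<notin>D) \<longrightarrow> c!j = \<rho>!j)"
proof -
  from assms obtain c where c: "conf_cell V E src tgt \<phi> n c"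
    and h: "\<forall>i<n. (\<exists>e s. (i, e, s) \<in> D \<and> c ! i = Ed e) \<or>
               ((\<forall>e s. (i, e, s) \<notin> D) \<and> c ! i = \<rho> ! i)"
    and u: "\<forall>(i, e, s)\<in>D. \<forall>(j, e', s')\<in>D. i = j \<longrightarrow> (e, s) = (e', s')"
    and r: "\<forall>(i, e, s)\<in>D. i < n \<and> e \<in> E \<and> \<rho> ! i = Vx (endpt src tgt e s)"
    unfolding link_simplex_def by blast
  have "\<forall>(i,e,s)\<in>D. c!i = Ed e"
  proof (clarify)
    fix i e s assume d: "(i,e,s) \<in> D"
    then have "i < n" using r by auto
    then show "c!i = Ed e" using h d u by fastforce
  qed
  moreover have "\<forall>j<n. (\<forall>e s. (j,e,s)\<notin>D) \<longrightarrow> c!j = \<rho>!j" using h by blast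
  ultimately show ?thesis using c by blast
qed

lemma ls_uniq:
  assumes "link_simplex V E src tgt \<phi> n \<rho> D" "(i,e,s) \<in> D" "(i,e',s') \<in> D"
  shows "(e,s) = (e',s')"
proof -
  have "\<forall>(i, e, s)\<in>D. \<forall>(j, e', s')\<in>D. i = j \<longrightarrow> (e, s) = (e', s')"
    using assms(1) unfolding link_simplex_def by (elim conjE) assumption
  then show ?thesis using assms(2,3) by fast
qed

lemma ls_mem:
  assumes "link_simplex V E src tgt \<phi> n \<rho> D" "(i,e,s) \<in> D"
  shows "i < n \<and> e \<in> E \<and> \<rho> ! i = Vx (endpt src tgt e s)"
proof -
  have "\<forall>(i, e, s)\<in>D. i < n \<and> e \<in> E \<and> \<rho> ! i = Vx (endpt src tgt e s)"
    using assms(1) unfolding link_simplex_def by (elim conjE) assumption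
  then show ?thesis using assms(2) by fast
qed

theorem theorem3p3:
  fixes V :: "'v set" and E :: "'e set" and src tgt :: "'e \<Rightarrow> 'v"
    and \<phi> :: "'v \<Rightarrow> 'c" and n :: nat and \<rho> :: "('v, 'e) cell list"
    and d1 d2 d3 :: "nat \<times> 'e \<times> bool"
  assumes "graph V E src tgt" and "locally_finite V E src tgt"
    and "n \<ge> 1"
    and "conf_cell V E src tgt \<phi> n \<rho>"
    and "d1 \<noteq> d2" and "d1 \<noteq> d3" and "d2 \<noteq> d3"
    and "link_simplex V E src tgt \<phi> n \<rho> {d1, d2}"
    and "link_simplex V E src tgt \<phi> n \<rho> {d1, d3}"
    and "link_simplex V E src tgt \<phi> n \<rho> {d2, d3}"
  shows "link_simplex V E src tgt \<phi> n \<rho> {d1, d2, d3}"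
proof -
  obtain i1 e1 s1 where D1: "d1 = (i1,e1,s1)" by (cases d1) auto
  obtain i2 e2 s2 where D2: "d2 = (i2,e2,s2)" by (cases d2) auto
  obtain i3 e3 s3 where D3: "d3 = (i3,e3,s3)" by (cases d3) auto
  note L12 = assms(8)[unfolded D1 D2] and L13 = assms(9)[unfolded D1 D3]
    and L23 = assms(10)[unfolded D2 D3]
  have i12: "i1 \<noteq> i2" using ls_uniq[OF L12, of i1 e1 s1 e2 s2] assms(5) D1 D2 by auto
  have i13: "i1 \<noteq> i3" using ls_uniq[OF L13, of i1 e1 s1 e3 s3] assms(6) D1 D3 by auto
  have i23: "i2 \<noteq> i3" using ls_uniq[OF L23, of i2 e2 s2 e3 s3] assms(7) D2 D3 by auto
  have r1: "i1 < n \<and> e1 \<in> E \<and> \<rho> ! i1 = Vx (endpt src tgt e1 s1)"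
    using ls_mem[OF L12, of i1 e1 s1] by simp
  have r2: "i2 < n \<and> e2 \<in> E \<and> \<rho> ! i2 = Vx (endpt src tgt e2 s2)"
    using ls_mem[OF L12, of i2 e2 s2] by simp
  have r3: "i3 < n \<and> e3 \<in> E \<and> \<rho> ! i3 = Vx (endpt src tgt e3 s3)"
    using ls_mem[OF L13, of i3 e3 s3] by simp
  have lr: "length \<rho> = n" using assms(4) unfolding conf_cell_def by auto
  obtain c12 where c12: "conf_cell V E src tgt \<phi> n c12" "c12!i1 = Ed e1" "c12!i2 = Ed e2"
    "\<forall>j<n. j \<noteq> i1 \<and> j \<noteq> i2 \<longrightarrow> c12!j = \<rho>!j"
    using ls_wit[OF L12] by auto
  obtain c13 where c13: "conf_cell V E src tgt \<phi> n c13" "c13!i1 = Ed e1" "c13!i3 = Ed e3"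
    "\<forall>j<n. j \<noteq> i1 \<and> j \<noteq> i3 \<longrightarrow> c13!j = \<rho>!j"
    using ls_wit[OF L13] by auto
  obtain c23 where c23: "conf_cell V E src tgt \<phi> n c23" "c23!i2 = Ed e2" "c23!i3 = Ed e3"
    "\<forall>j<n. j \<noteq> i2 \<and> j \<noteq> i3 \<longrightarrow> c23!j = \<rho>!j"
    using ls_wit[OF L23] by auto
  define c where "c = \<rho>[i1 := Ed e1, i2 := Ed e2, i3 := Ed e3]"
  have lc: "length c = n" using lr by (simp add: c_def)
  have ci1: "c!i1 = Ed e1" using r1 lr i12 i13 by (simp add: c_def)
  have ci2: "c!i2 = Ed e2" using r2 lr i23 by (simp add: c_def)
  have ci3: "c!i3 = Ed e3" using r3 lr by (simp add: c_def)
  have co: "\<And>j. j \<noteq> i1 \<Longrightarrow> j \<noteq> i2 \<Longrightarrow> j \<noteq> i3 \<Longrightarrow> c!j = \<rho>!j" by (simp add: c_def)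
  have a12: "\<And>j. j < n \<Longrightarrow> j \<noteq> i3 \<Longrightarrow> c!j = c12!j"
    using c12(2,3,4) ci1 ci2 co by (case_tac "j = i1"; case_tac "j = i2") auto
  have a13: "\<And>j. j < n \<Longrightarrow> j \<noteq> i2 \<Longrightarrow> c!j = c13!j"
    using c13(2,3,4) ci1 ci3 co by (case_tac "j = i1"; case_tac "j = i3") auto
  have a23: "\<And>j. j < n \<Longrightarrow> j \<noteq> i1 \<Longrightarrow> c!j = c23!j"
    using c23(2,3,4) ci2 ci3 co by (case_tac "j = i2"; case_tac "j = i3") auto
  have cl: "\<And>d i. conf_cell V E src tgt \<phi> n d \<Longrightarrow> i < n \<Longrightarrow> is_cell V E (d ! i)"
    unfolding conf_cell_def by blast
  have cd: "\<And>d i j. conf_cell V E src tgt \<phi> n d \<Longrightarrow> i < n \<Longrightarrow> j < n \<Longrightarrow> i \<noteq> j \<Longrightarrow>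
     \<phi> ` bdry src tgt (d ! i) \<inter> \<phi> ` bdry src tgt (d ! j) = {}"
    unfolding conf_cell_def by blast
  have cc: "conf_cell V E src tgt \<phi> n c"
    unfolding conf_cell_def
  proof (intro conjI allI impI)
    show "length c = n" by fact
  next
    fix i assume i: "i < n"
    show "is_cell V E (c ! i)"
    proof (cases "i = i3")
      case True then show ?thesis using a13[OF i] i23 cl[OF c13(1) i] by simp
    next
      case False then show ?thesis using a12[OF i] cl[OF c12(1) i] by simp
    qed
  next
    fix i j assume i: "i < n" and j: "j < n" and ij: "i \<noteq> j"
    show "\<phi> ` bdry src tgt (c ! i) \<inter> \<phi> ` bdry src tgt (c ! j) = {}"
    proof (cases "i \<noteq> i3 \<and> j \<noteq> i3")
      case True then show ?thesis using a12[OF i] a12[OF j] cd[OF c12(1) i j ij] by simp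
    next
      case False
      show ?thesis
      proof (cases "i \<noteq> i2 \<and> j \<noteq> i2")
        case True then show ?thesis using a13[OF i] a13[OF j] cd[OF c13(1) i j ij] by simp
      next
        case F2: False
        have "i \<noteq> i1 \<and> j \<noteq> i1" using False F2 ij i12 i13 i23 by auto
        then show ?thesis using a23[OF i] a23[OF j] cd[OF c23(1) i j ij] by simp
      qed
    qed
  qed
  show ?thesis
    unfolding link_simplex_def D1 D2 D3
  proof (intro conjI)
    show "\<exists>c. conf_cell V E src tgt \<phi> n c \<and>
        (\<forall>i<n. (\<exists>e s. (i, e, s) \<in> {(i1, e1, s1), (i2, e2, s2), (i3, e3, s3)} \<and> c ! i = Ed e) \<or>
               ((\<forall>e s. (i, e, s) \<notin> {(i1, e1, s1), (i2, e2, s2), (i3, e3, s3)}) \<and> c ! i = \<rho> ! i))"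
    proof (rule exI[of _ c], intro conjI allI impI)
      show "conf_cell V E src tgt \<phi> n c" by fact
    next
      fix i assume "i < n"
      show "(\<exists>e s. (i, e, s) \<in> {(i1, e1, s1), (i2, e2, s2), (i3, e3, s3)} \<and> c ! i = Ed e) \<or>
               ((\<forall>e s. (i, e, s) \<notin> {(i1, e1, s1), (i2, e2, s2), (i3, e3, s3)}) \<and> c ! i = \<rho> ! i)"
      proof (cases "i = i1 \<or> i = i2 \<or> i = i3")
        case True then show ?thesis using ci1 ci2 ci3 by blast
      next
        case False then show ?thesis using co by auto
      qed
    qed
  qed (use r1 r2 r3 i12 i13 i23 in auto)
qed

end
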